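(* Let $c$ be the minimum value such that $\Pr_\tau[S]\le c\,|S|$ for all intervals $S\subseteq[0,1]$ with $|S|\ge2\rho$. For any budget $K\le M$, run the LEA algorithm with $\gamma=\sqrt{V_{\mathcal U^*}/(8cM)}$ (so $\rho=\gamma\sqrt\epsilon$). Then it outputs a $(1-\epsilon,\delta)$-optimal allocation using $O\big(M\ln(2M/\delta)/\rho^2\big)$ samples.
   Context: A population is partitioned into $M$ units $u\in\{1,\dots,M\}$ with unknown treatment effects $\tau(u)\in[0,1]$, pairwise distinct. $\Pr_\tau[S]=|\{u:\tau(u)\in S\}|/M$. For budget $K\in\{1,\dots,M\}$, $\mathcal U^*$ is the set of the $K$ units with largest $\tau(u)$ and $V_{\mathcal U^*}=\sum_{u\in\mathcal U^*}\tau(u)$; an allocation $S$ of $K$ units is $(1-\epsilon,\delta)$-optimal if $\sum_{u\in S}\tau(u)\ge(1-\epsilon)V_{\mathcal U^*}$ with probability at least $1-\delta$. An estimation oracle, given $u$ and $\epsilon',\delta'$, returns $\hat\tau(u)$ with $|\hat\tau(u)-\tau(u)|\le\epsilon'$ with probability $\ge1-\delta'$ using $O(\ln(2/\delta')/\epsilon'^2)$ samples. The LEA algorithm: on input $M$ units, budget $K$, parameters $\epsilon,\delta,\gamma>0$, set $\rho=\gamma\sqrt\epsilon$, obtain for each unit $u$ a $(\rho,\delta/M)$-accurate estimate $\hat\tau(u)$ from the oracle, and output the $K$ units with the largest $\hat\tau(u)$. *)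

theory Defs
  imports "HOL-Probability.Probability"
begin

definition Pr_tau :: "'u set \<Rightarrow> ('u \<Rightarrow> real) \<Rightarrow> real set \<Rightarrow> real" where
  "Pr_tau U f S = real (card {u \<in> U. f u \<in> S}) / real (card U)"

definition is_top_K :: "('u \<Rightarrow> real) \<Rightarrow> 'u set \<Rightarrow> nat \<Rightarrow> 'u set \<Rightarrow> bool" where
  "is_top_K f U K S \<longleftrightarrow> S \<subseteq> U \<and> card S = K \<and> (\<forall>u\<in>S. \<forall>v\<in>U - S. f v \<le> f u)"

text \<open>c is admissible if Pr_tau[S] \<le> c |S| for all intervals S \<subseteq> [0,1] with |S| \<ge> 2 rho.
  (Closed intervals suffice: every interval is contained in the closed interval of equal length.)\<close>
definition interval_bound :: "'u set \<Rightarrow> ('u \<Rightarrow> real) \<Rightarrow> real \<Rightarrow> real \<Rightarrow> bool" where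
  "interval_bound U f \<rho> c \<longleftrightarrow>
     (\<forall>a b. 0 \<le> a \<and> a \<le> b \<and> b \<le> 1 \<and> b - a \<ge> 2 * \<rho> \<longrightarrow> Pr_tau U f {a..b} \<le> c * (b - a))"

end

theory Submission
  imports Defs
begin
lemma det_loss:
  fixes U :: "'u set" and \<tau> th :: "'u \<Rightarrow> real"
  assumes finU: "finite U"
    and tr: "\<forall>u\<in>U. 0 \<le> \<tau> u \<and> \<tau> u \<le> 1"
    and Ust: "is_top_K \<tau> U K Ust" and S: "is_top_K th U K S"
    and acc: "\<forall>u\<in>U. \<bar>th u - \<tau> u\<bar> \<le> \<rho>"
    and ib: "interval_bound U \<tau> \<rho> c" and rp: "0 < \<rho>" "2 * \<rho> \<le> 1"
  shows "(\<Sum>u\<in>Ust. \<tau> u) - (\<Sum>u\<in>S. \<tau> u) \<le> 2 * c * real (card U) * \<rho>\<^sup>2"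
proof -
  have UstU: "Ust \<subseteq> U" "card Ust = K" and Ustop: "\<forall>u\<in>Ust. \<forall>v\<in>U - Ust. \<tau> v \<le> \<tau> u"
    using Ust unfolding is_top_K_def by auto
  have SU: "S \<subseteq> U" "card S = K" and Stop: "\<forall>u\<in>S. \<forall>v\<in>U - S. th v \<le> th u"
    using S unfolding is_top_K_def by auto
  have finUst: "finite Ust" and finS: "finite S" using UstU SU finU finite_subset by auto
  define A where "A = Ust - S"
  define B where "B = S - Ust"
  have finA: "finite A" and finB: "finite B" using finUst finS A_def B_def by auto
  have cAB: "card A = card B"
  proof -
    have "card A = card Ust - card (Ust \<inter> S)" unfolding A_def
      using card_Diff_subset_Int[of Ust S] finUst by simp
    moreover have "card B = card S - card (Ust \<inter> S)" unfolding B_def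
      using card_Diff_subset_Int[of S Ust] finS by (simp add: Int_commute)
    ultimately show ?thesis using UstU SU by simp
  qed
  define m where "m = card A"
  have e1: "(\<Sum>u\<in>Ust. \<tau> u) = (\<Sum>u\<in>Ust \<inter> S. \<tau> u) + (\<Sum>u\<in>A. \<tau> u)"
    unfolding A_def using sum.Int_Diff[OF finUst, of \<tau> S] by simp
  have e2: "(\<Sum>u\<in>S. \<tau> u) = (\<Sum>u\<in>Ust \<inter> S. \<tau> u) + (\<Sum>u\<in>B. \<tau> u)"
    unfolding B_def using sum.Int_Diff[OF finS, of \<tau> Ust] by (simp add: Int_commute)
  show ?thesis
  proof (cases "A = {}")
    case True
    then have "B = {}" using cAB finA finB by auto
    then have "(\<Sum>u\<in>Ust. \<tau> u) - (\<Sum>u\<in>S. \<tau> u) = 0" using e1 e2 True by simp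
    moreover have "c \<ge> 0"
    proof -
      from rp have "0 \<le> (0::real) \<and> 0 \<le> 2*\<rho> \<and> 2*\<rho> \<le> 1 \<and> 2*\<rho> - 0 \<ge> 2*\<rho>" by simp
      then have "Pr_tau U \<tau> {0..2*\<rho>} \<le> c * (2*\<rho> - 0)" using ib unfolding interval_bound_def by blast
      moreover have "Pr_tau U \<tau> {0..2*\<rho>} \<ge> 0" unfolding Pr_tau_def by simp
      ultimately have "0 \<le> c * (2*\<rho>)" by (metis diff_zero order_trans)
      then show ?thesis using rp by (simp add: zero_le_mult_iff)
    qed
    ultimately show ?thesis by simp
  next
    case False
    then have Bne: "B \<noteq> {}" using cAB finA finB by auto
    define x where "x = Min (\<tau> ` B)"
    have "x \<in> \<tau> ` B" unfolding x_def using Min_in[of "\<tau> ` B"] finB Bne by blast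
    then obtain v0 where v0: "v0 \<in> B" "\<tau> v0 = x" by force
    obtain u0 where u0: "u0 \<in> A" using False by auto
    have Bx: "\<forall>v\<in>B. x \<le> \<tau> v" unfolding x_def using finB by simp
    have Aup: "\<forall>u\<in>A. \<tau> u \<le> x + 2*\<rho>"
    proof
      fix u assume u: "u \<in> A"
      have "th u \<le> th v0" using Stop u v0(1) A_def B_def UstU by auto
      moreover have "\<bar>th u - \<tau> u\<bar> \<le> \<rho>" "\<bar>th v0 - \<tau> v0\<bar> \<le> \<rho>"
        using acc u v0(1) A_def B_def UstU SU by auto
      ultimately show "\<tau> u \<le> x + 2*\<rho>" using v0(2) by linarith
    qed
    have Alow: "\<forall>u\<in>A. x \<le> \<tau> u" using Ustop v0 A_def B_def SU by auto
    have Bup: "\<forall>v\<in>B. \<tau> v \<le> x + 2*\<rho>"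
    proof
      fix v assume "v \<in> B"
      then have "\<tau> v \<le> \<tau> u0" using Ustop u0 A_def B_def SU by auto
      then show "\<tau> v \<le> x + 2*\<rho>" using Aup u0 by force
    qed
    define a where "a = min x (1 - 2*\<rho>)"
    have x0: "0 \<le> x" using v0 tr B_def SU by auto
    have ab: "0 \<le> a \<and> a \<le> a + 2*\<rho> \<and> a + 2*\<rho> \<le> 1 \<and> (a + 2*\<rho>) - a \<ge> 2*\<rho>"
      using x0 rp unfolding a_def by auto
    have sub: "A \<union> B \<subseteq> {u \<in> U. \<tau> u \<in> {a..a+2*\<rho>}}"
    proof
      fix u assume u: "u \<in> A \<union> B"
      then have uU: "u \<in> U" using A_def B_def UstU SU by auto
      have "x \<le> \<tau> u" "\<tau> u \<le> x + 2*\<rho>" using u Alow Aup Bx Bup by auto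
      moreover have "\<tau> u \<le> 1" using tr uU by auto
      ultimately show "u \<in> {u \<in> U. \<tau> u \<in> {a..a+2*\<rho>}}" using uU unfolding a_def by auto
    qed
    have "card (A \<union> B) = 2 * m"
    proof -
      have "A \<inter> B = {}" unfolding A_def B_def by blast
      then show ?thesis using card_Un_disjoint[OF finA finB] cAB m_def by simp
    qed
    then have "real (2*m) \<le> real (card {u \<in> U. \<tau> u \<in> {a..a+2*\<rho>}})"
      using card_mono[OF _ sub] finU by simp
    moreover have "Pr_tau U \<tau> {a..a+2*\<rho>} \<le> c * (2*\<rho>)"
      using ib ab unfolding interval_bound_def by (metis add_diff_cancel_left')
    moreover have "card U > 0" using u0 A_def UstU finU by (metis Diff_iff card_gt_0_iff empty_iff subsetD)
    ultimately have mb: "2 * real m \<le> c * (2*\<rho>) * real (card U)"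
      unfolding Pr_tau_def by (simp add: divide_le_eq)
    have sA: "(\<Sum>u\<in>A. \<tau> u) \<le> real m * (x + 2*\<rho>)"
      using sum_mono[of A \<tau> "\<lambda>_. x + 2*\<rho>"] Aup m_def by simp
    have sB: "(\<Sum>u\<in>B. \<tau> u) \<ge> real m * x"
      using sum_mono[of B "\<lambda>_. x" \<tau>] Bx m_def cAB by simp
    have "(\<Sum>u\<in>Ust. \<tau> u) - (\<Sum>u\<in>S. \<tau> u) \<le> 2*\<rho> * real m"
      using e1 e2 sA sB by (simp add: algebra_simps)
    also have "\<dots> \<le> \<rho> * (c * (2*\<rho>) * real (card U))"
      using mb rp by (simp add: mult_left_mono)
    finally show ?thesis by (simp add: power2_eq_square algebra_simps)
  qed
qed

theorem theorem4:
  fixes U :: "'u set" and \<tau> :: "'u \<Rightarrow> real" and M K :: nat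
    and \<epsilon> \<delta> \<gamma> \<rho> c V C :: real and Ustar :: "'u set"
    and P :: "'w measure" and \<tau>hat :: "'u \<Rightarrow> 'w \<Rightarrow> real"
    and alloc :: "'w \<Rightarrow> 'u set" and samples :: "'u \<Rightarrow> 'w \<Rightarrow> nat"
  assumes finU: "finite U" and cardU: "card U = M"
    and tau_range: "\<forall>u\<in>U. 0 \<le> \<tau> u \<and> \<tau> u \<le> 1"
    and tau_distinct: "inj_on \<tau> U"
    and K: "1 \<le> K" "K \<le> M"
    and eps: "\<epsilon> > 0" and del: "\<delta> > 0"
    and Ustar: "is_top_K \<tau> U K Ustar" and V_def: "V = (\<Sum>u\<in>Ustar. \<tau> u)"
    and c_min: "interval_bound U \<tau> \<rho> c"
               "\<And>c'. interval_bound U \<tau> \<rho> c' \<Longrightarrow> c \<le> c'"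
    and gamma: "\<gamma> = sqrt (V / (8 * c * real M))"
    and rho: "\<rho> = \<gamma> * sqrt \<epsilon>"
    and P: "prob_space P"
    and est_meas: "\<forall>u\<in>U. \<tau>hat u \<in> borel_measurable P"
    and oracle_acc: "\<forall>u\<in>U. measure P {\<omega> \<in> space P. \<bar>\<tau>hat u \<omega> - \<tau> u\<bar> \<le> \<rho>} \<ge> 1 - \<delta> / real M"
    and oracle_cost: "\<forall>u\<in>U. \<forall>\<omega>\<in>space P.
                         real (samples u \<omega>) \<le> C * ln (2 / (\<delta> / real M)) / \<rho>\<^sup>2"
    and lea_output: "\<forall>\<omega>\<in>space P. is_top_K (\<lambda>u. \<tau>hat u \<omega>) U K (alloc \<omega>)"
  shows "(\<exists>E \<in> sets P. measure P E \<ge> 1 - \<delta> \<and>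
            (\<forall>\<omega>\<in>E. (\<Sum>u\<in>alloc \<omega>. \<tau> u) \<ge> (1 - \<epsilon>) * V))
         \<and> (\<forall>\<omega>\<in>space P. real (\<Sum>u\<in>U. samples u \<omega>) \<le> C * real M * ln (2 * real M / \<delta>) / \<rho>\<^sup>2)"
proof -
  have M1: "M \<ge> 1" using K by simp
  then have Une: "U \<noteq> {}" using cardU by auto
  then obtain u0 where u0: "u0 \<in> U" by blast
  have Mpos: "real M > 0" using M1 by simp
  have rpos: "\<rho> > 0"
  proof (rule ccontr)
    assume "\<not> \<rho> > 0"
    then have "0 \<le> \<tau> u0 \<and> \<tau> u0 \<le> \<tau> u0 \<and> \<tau> u0 \<le> 1 \<and> \<tau> u0 - \<tau> u0 \<ge> 2 * \<rho>"
      using tau_range u0 by auto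
    then have "Pr_tau U \<tau> {\<tau> u0..\<tau> u0} \<le> c * (\<tau> u0 - \<tau> u0)"
      using c_min(1) unfolding interval_bound_def by blast
    then have "real (card {u \<in> U. \<tau> u \<in> {\<tau> u0..\<tau> u0}}) \<le> 0"
      unfolding Pr_tau_def using Mpos cardU by (simp add: divide_le_0_iff)
    moreover have "u0 \<in> {u \<in> U. \<tau> u \<in> {\<tau> u0..\<tau> u0}}" using u0 by simp
    moreover have "finite {u \<in> U. \<tau> u \<in> {\<tau> u0..\<tau> u0}}" using finU by simp
    ultimately show False by (metis card_0_eq empty_iff of_nat_le_0_iff)
  qed
  have r1: "2 * \<rho> \<le> 1"
  proof (rule ccontr)
    assume "\<not> 2 * \<rho> \<le> 1"
    then have "interval_bound U \<tau> \<rho> (c - 1)" unfolding interval_bound_def by auto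
    then show False using c_min(2) by fastforce
  qed
  have "Pr_tau U \<tau> {0..1} \<le> c * (1 - 0)"
    using c_min(1) r1 unfolding interval_bound_def by (metis diff_zero le_numeral_extra(1) order_refl)
  moreover have "{u \<in> U. \<tau> u \<in> {0..1}} = U" using tau_range by auto
  ultimately have c1: "c \<ge> 1" unfolding Pr_tau_def using Mpos cardU by simp
  have gpos: "\<gamma> > 0" using rpos rho eps
    by (metis linorder_not_le mult_nonpos_nonneg real_sqrt_ge_zero less_imp_le)
  then have Vq: "V / (8 * c * real M) > 0" using gamma by simp
  have rho2: "\<rho>\<^sup>2 = V / (8 * c * real M) * \<epsilon>"
    using Vq eps rho gamma by (simp add: power_mult_distrib)
  have cM: "c * real M > 0" using c1 Mpos by simp
  have Vpos: "V > 0" using Vq cM by (simp add: zero_less_divide_iff)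
  have det: "(1 - \<epsilon>) * V \<le> (\<Sum>u\<in>alloc \<omega>. \<tau> u)"
    if "\<omega> \<in> space P" "\<forall>u\<in>U. \<bar>\<tau>hat u \<omega> - \<tau> u\<bar> \<le> \<rho>" for \<omega>
  proof -
    have "V - (\<Sum>u\<in>alloc \<omega>. \<tau> u) \<le> 2 * c * real (card U) * \<rho>\<^sup>2"
      using det_loss[OF finU tau_range Ustar lea_output[rule_format, OF that(1)] that(2) c_min(1) rpos r1]
        V_def by simp
    also have "\<dots> = V * \<epsilon> / 4" using rho2 cardU c1 Mpos by (simp add: field_simps)
    also have "\<dots> \<le> V * \<epsilon>" using Vpos eps by simp
    finally show ?thesis by (simp add: algebra_simps)
  qed
  interpret prob_space P by (rule P)
  define G where "G u = {\<omega> \<in> space P. \<bar>\<tau>hat u \<omega> - \<tau> u\<bar> \<le> \<rho>}" for u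
  have Gm: "G u \<in> sets P" if "u \<in> U" for u
  proof -
    have "(\<lambda>\<omega>. \<bar>\<tau>hat u \<omega> - \<tau> u\<bar>) \<in> borel_measurable P"
      using est_meas that by (intro borel_measurable_abs borel_measurable_diff) auto
    then show ?thesis unfolding G_def by measurable
  qed
  define E where "E = {\<omega> \<in> space P. \<forall>u\<in>U. \<bar>\<tau>hat u \<omega> - \<tau> u\<bar> \<le> \<rho>}"
  have Em: "E \<in> sets P" unfolding E_def
    using Gm unfolding G_def by (intro sets.sets_Collect_finite_All finU) auto
  have "space P - E = (\<Union>u\<in>U. space P - G u)" unfolding E_def G_def by auto
  then have "measure P (space P - E) \<le> (\<Sum>u\<in>U. measure P (space P - G u))"
    using finite_measure_subadditive_finite[OF finU, of "\<lambda>u. space P - G u"] Gm by auto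
  also have "\<dots> \<le> (\<Sum>u\<in>U. \<delta> / real M)"
  proof (rule sum_mono)
    fix u assume "u \<in> U"
    then show "measure P (space P - G u) \<le> \<delta> / real M"
      using prob_compl[OF Gm] oracle_acc unfolding G_def by force
  qed
  also have "\<dots> = \<delta>" using cardU Mpos by simp
  finally have "measure P E \<ge> 1 - \<delta>" using prob_compl[OF Em] by simp
  moreover have "\<forall>\<omega>\<in>E. (\<Sum>u\<in>alloc \<omega>. \<tau> u) \<ge> (1 - \<epsilon>) * V"
    using det unfolding E_def by blast
  ultimately have part1: "\<exists>E \<in> sets P. measure P E \<ge> 1 - \<delta> \<and>
            (\<forall>\<omega>\<in>E. (\<Sum>u\<in>alloc \<omega>. \<tau> u) \<ge> (1 - \<epsilon>) * V)" using Em by blast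
  have part2: "real (\<Sum>u\<in>U. samples u \<omega>) \<le> C * real M * ln (2 * real M / \<delta>) / \<rho>\<^sup>2"
    if "\<omega> \<in> space P" for \<omega>
  proof -
    have eq: "2 / (\<delta> / real M) = 2 * real M / \<delta>" by simp
    have "real (\<Sum>u\<in>U. samples u \<omega>) = (\<Sum>u\<in>U. real (samples u \<omega>))" by simp
    also have "\<dots> \<le> (\<Sum>u\<in>U. C * ln (2 * real M / \<delta>) / \<rho>\<^sup>2)"
      using oracle_cost that eq by (intro sum_mono) auto
    also have "\<dots> = C * real M * ln (2 * real M / \<delta>) / \<rho>\<^sup>2" using cardU by simp
    finally show ?thesis .
  qed
  show ?thesis using part1 part2 by blast
qed

end
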